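(* Let $G$ be a two-player game with strategy sets $S_1,S_2$, utilities $u_1,u_2$, and a nonempty set $\mathrm{NE}$ of pure Nash equilibria taken as the solution set. Suppose that for all $x,x'\in S_1$ and $y,y'\in S_2$, $$u_1(x,y)\le u_1(x',y)\ \text{and}\ u_2(x,y)\le u_2(x,y')\ \Longrightarrow\ \mathrm{sw}(x,y)\le\mathrm{sw}(x',y)\ \text{or}\ \mathrm{sw}(x,y)\le\mathrm{sw}(x,y').$$ Then $\mathrm{PoTS}=\mathrm{PoS}$.
   Context: $\mathrm{sw}=u_1+u_2$, assumed to have positive maximum over $S_1\times S_2$; minima/maxima are read as infima/suprema if not attained. $T(\mathrm{NE})$ is the set of profiles $(x,y)$ such that $x$ is player 1's strategy in some element of $\mathrm{NE}$ and $y$ is player 2's strategy in some element of $\mathrm{NE}$. $\mathrm{PoS}=\max_{\mathrm{NE}}\mathrm{sw}/\max_S\mathrm{sw}$ and $\mathrm{PoTS}=\max_{T(\mathrm{NE})}\mathrm{sw}/\max_S\mathrm{sw}$. *)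

theory Defs
  imports Complex_Main
begin

definition sw :: "('a \<Rightarrow> 'b \<Rightarrow> real) \<Rightarrow> ('a \<Rightarrow> 'b \<Rightarrow> real) \<Rightarrow> 'a \<Rightarrow> 'b \<Rightarrow> real" where
  "sw u1 u2 x y = u1 x y + u2 x y"

definition NE :: "'a set \<Rightarrow> 'b set \<Rightarrow> ('a \<Rightarrow> 'b \<Rightarrow> real) \<Rightarrow> ('a \<Rightarrow> 'b \<Rightarrow> real) \<Rightarrow> ('a \<times> 'b) set" where
  "NE S1 S2 u1 u2 = {(x, y). x \<in> S1 \<and> y \<in> S2 \<and>
      (\<forall>x'\<in>S1. u1 x' y \<le> u1 x y) \<and> (\<forall>y'\<in>S2. u2 x y' \<le> u2 x y)}"

definition T_NE :: "'a set \<Rightarrow> 'b set \<Rightarrow> ('a \<Rightarrow> 'b \<Rightarrow> real) \<Rightarrow> ('a \<Rightarrow> 'b \<Rightarrow> real) \<Rightarrow> ('a \<times> 'b) set" where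
  "T_NE S1 S2 u1 u2 = fst ` NE S1 S2 u1 u2 \<times> snd ` NE S1 S2 u1 u2"

text \<open>Maxima read as suprema.\<close>
definition PoS :: "'a set \<Rightarrow> 'b set \<Rightarrow> ('a \<Rightarrow> 'b \<Rightarrow> real) \<Rightarrow> ('a \<Rightarrow> 'b \<Rightarrow> real) \<Rightarrow> real" where
  "PoS S1 S2 u1 u2 =
     (SUP p\<in>NE S1 S2 u1 u2. sw u1 u2 (fst p) (snd p)) / (SUP p\<in>S1 \<times> S2. sw u1 u2 (fst p) (snd p))"

definition PoTS :: "'a set \<Rightarrow> 'b set \<Rightarrow> ('a \<Rightarrow> 'b \<Rightarrow> real) \<Rightarrow> ('a \<Rightarrow> 'b \<Rightarrow> real) \<Rightarrow> real" where
  "PoTS S1 S2 u1 u2 =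
     (SUP p\<in>T_NE S1 S2 u1 u2. sw u1 u2 (fst p) (snd p)) / (SUP p\<in>S1 \<times> S2. sw u1 u2 (fst p) (snd p))"

end

theory Submission
  imports Defs
begin

theorem proposition4:
  fixes S1 :: "'a set" and S2 :: "'b set" and u1 u2 :: "'a \<Rightarrow> 'b \<Rightarrow> real"
  assumes ne: "NE S1 S2 u1 u2 \<noteq> {}"
    and bdd: "bdd_above ((\<lambda>p. sw u1 u2 (fst p) (snd p)) ` (S1 \<times> S2))"
    and pos: "(SUP p\<in>S1 \<times> S2. sw u1 u2 (fst p) (snd p)) > 0"
    and hyp: "\<forall>x\<in>S1. \<forall>x'\<in>S1. \<forall>y\<in>S2. \<forall>y'\<in>S2.
               u1 x y \<le> u1 x' y \<and> u2 x y \<le> u2 x y' \<longrightarrow>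
               sw u1 u2 x y \<le> sw u1 u2 x' y \<or> sw u1 u2 x y \<le> sw u1 u2 x y'"
  shows "PoTS S1 S2 u1 u2 = PoS S1 S2 u1 u2"
proof -
  let ?f = "\<lambda>p. sw u1 u2 (fst p) (snd p)"
  let ?N = "NE S1 S2 u1 u2"
  let ?T = "T_NE S1 S2 u1 u2"
  have NS: "?N \<subseteq> S1 \<times> S2" unfolding NE_def by auto
  have TS: "?T \<subseteq> S1 \<times> S2" unfolding T_NE_def NE_def by auto
  have NT: "?N \<subseteq> ?T" unfolding T_NE_def by force
  have bN: "bdd_above (?f ` ?N)" using bdd NS by (meson bdd_above_mono image_mono)
  have bT: "bdd_above (?f ` ?T)" using bdd TS by (meson bdd_above_mono image_mono)
  have Tne: "?T \<noteq> {}" using ne NT by auto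
  have key: "?f p \<le> (SUP q\<in>?N. ?f q)" if "p \<in> ?T" for p
  proof -
    obtain x y where p: "p = (x,y)" by force
    from that p obtain b a where xb: "(x,b) \<in> ?N" and ay: "(a,y) \<in> ?N"
      unfolding T_NE_def by force
    have xs: "x \<in> S1" "b \<in> S2" "a \<in> S1" "y \<in> S2"
      and br1: "u1 x y \<le> u1 a y" and br2: "u2 x y \<le> u2 x b"
      using xb ay unfolding NE_def by auto
    have "sw u1 u2 x y \<le> sw u1 u2 a y \<or> sw u1 u2 x y \<le> sw u1 u2 x b"
      using hyp xs br1 br2 by blast
    moreover have "sw u1 u2 a y \<le> (SUP q\<in>?N. ?f q)"
      using cSUP_upper[OF ay bN] by simp
    moreover have "sw u1 u2 x b \<le> (SUP q\<in>?N. ?f q)"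
      using cSUP_upper[OF xb bN] by simp
    ultimately show ?thesis using p by auto
  qed
  have "(SUP q\<in>?T. ?f q) \<le> (SUP q\<in>?N. ?f q)"
    using Tne key by (intro cSUP_least) auto
  moreover have "(SUP q\<in>?N. ?f q) \<le> (SUP q\<in>?T. ?f q)"
    using cSUP_subset_mono[OF ne bT NT] by simp
  ultimately have "(SUP q\<in>?T. ?f q) = (SUP q\<in>?N. ?f q)" by linarith
  then show ?thesis unfolding PoTS_def PoS_def by simp
qed

end
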